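(* Let $\mathsf{P}>0$, $A_{\mathsf{u},k}>0$, $\sigma_k^2>0$, $\mathsf{g}_k>0$ for $k\in\{1,2\}$, $k_0,\eta>0$, and $\overline{\rho}\in(0,1]$. Set $\beta_k=\frac{A_{\mathsf{u},k}k_0^2\eta^2}{4\pi\sigma_k^2}$ and $\overline{\gamma}_{\mathsf{du},k}=\beta_k\mathsf{P}_k$. Consider the problem $$\max_{\mathsf{P}_1,\mathsf{P}_2\ge0,\ \mathsf{P}_1+\mathsf{P}_2\le\mathsf{P}}\ \log_2\big(1+\overline{\gamma}_{\mathsf{du},1}\mathsf{g}_1+\overline{\gamma}_{\mathsf{du},2}\mathsf{g}_2+\overline{\gamma}_{\mathsf{du},1}\overline{\gamma}_{\mathsf{du},2}\mathsf{g}_1\mathsf{g}_2\overline{\rho}\big).$$ Let $\xi=\dfrac{A_{\mathsf{u},1}\mathsf{g}_1/\sigma_1^2-A_{\mathsf{u},2}\mathsf{g}_2/\sigma_2^2}{A_{\mathsf{u},1}A_{\mathsf{u},2}k_0^2\eta^2\mathsf{g}_1\mathsf{g}_2\overline{\rho}/(4\pi\sigma_1^2\sigma_2^2)}$. Then an optimal power allocation is $$(\mathsf{P}_1^\star,\mathsf{P}_2^\star)=\begin{cases}(\mathsf{P},0)&\xi\ge\mathsf{P},\\(0,\mathsf{P})&\xi\le-\mathsf{P},\\\big(\tfrac{\mathsf{P}+\xi}{2},\tfrac{\mathsf{P}-\xi}{2}\big)&\text{otherwise}.\end{cases}$$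
   Context: In the paper this is the power allocation of the dual uplink channel of a two-user downlink channel served by a continuous-aperture array, where $\mathsf{g}_k$ are the users' channel gains and $\overline{\rho}=1-|\rho|^2$ with $\rho$ the channel correlation factor. *)

theory Defs
  imports Complex_Main
begin

definition beta :: "real \<Rightarrow> real \<Rightarrow> real \<Rightarrow> real \<Rightarrow> real" where
  "beta A sigma2 k0 eta = A * k0^2 * eta^2 / (4 * pi * sigma2)"

definition dual_rate ::
  "real \<Rightarrow> real \<Rightarrow> real \<Rightarrow> real \<Rightarrow> real \<Rightarrow> real \<Rightarrow> real \<Rightarrow> real" where
  "dual_rate b1 b2 g1 g2 rhobar P1 P2 =
     log 2 (1 + (b1 * P1) * g1 + (b2 * P2) * g2 + (b1 * P1) * (b2 * P2) * g1 * g2 * rhobar)"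

definition feasible :: "real \<Rightarrow> real \<Rightarrow> real \<Rightarrow> bool" where
  "feasible P P1 P2 \<longleftrightarrow> P1 \<ge> 0 \<and> P2 \<ge> 0 \<and> P1 + P2 \<le> P"

definition xi :: "real \<Rightarrow> real \<Rightarrow> real \<Rightarrow> real \<Rightarrow> real \<Rightarrow> real \<Rightarrow> real \<Rightarrow> real \<Rightarrow> real \<Rightarrow> real" where
  "xi A1 A2 s1 s2 g1 g2 k0 eta rhobar =
     (A1 * g1 / s1 - A2 * g2 / s2) /
     (A1 * A2 * k0^2 * eta^2 * g1 * g2 * rhobar / (4 * pi * s1 * s2))"

definition popt :: "real \<Rightarrow> real \<Rightarrow> real \<times> real" where
  "popt P x = (if x \<ge> P then (P, 0) else if x \<le> - P then (0, P)
               else ((P + x) / 2, (P - x) / 2))"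

end

theory Submission
  imports Defs
begin

lemma core:
  fixes a c d P x P1 P2 :: real
  assumes "c > 0" "d > 0" "P > 0" "a = c + d * x" "P1 \<ge> 0" "P2 \<ge> 0" "P1 + P2 \<le> P"
  shows "a*P1 + c*P2 + d*P1*P2 \<le> a*fst(popt P x) + c*snd(popt P x) + d*fst(popt P x)*snd(popt P x)"
proof -
  define h where "h t = t*x + t*P - t*t" for t
  have q: "a*t + c*(P-t) + d*t*(P-t) = c*P + d * h t" for t
    unfolding h_def assms(4) by (simp add: algebra_simps)
  have s1: "a*P1 + c*P2 + d*P1*P2 \<le> a*P1 + c*(P-P1) + d*P1*(P-P1)"
  proof -
    have "0 \<le> (c + d*P1)*(P-P1-P2)" using assms by (intro mult_nonneg_nonneg) auto
    thus ?thesis by (simp add: algebra_simps)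
  qed
  have s2: "h P1 \<le> h (fst (popt P x))"
  proof (cases "x \<ge> P")
    case True
    have "0 \<le> (P-P1)*(x-P1)" using True assms by (intro mult_nonneg_nonneg) auto
    then show ?thesis using True unfolding popt_def h_def by (simp add: algebra_simps)
  next
    case F: False
    show ?thesis
    proof (cases "x \<le> -P")
      case True
      have "P1*(x+P-P1) \<le> 0" using True assms by (intro mult_nonneg_nonpos) auto
      then show ?thesis using True F unfolding popt_def h_def by (simp add: algebra_simps)
    next
      case False
      have "h ((P+x)/2) - h P1 = ((P+x)/2 - P1)^2" unfolding h_def by (simp add: power2_eq_square field_simps)
      moreover have "0 \<le> ((P+x)/2 - P1)^2" by simp
      moreover have "fst (popt P x) = (P+x)/2" using False F unfolding popt_def by simp
      ultimately show ?thesis by (metis diff_ge_0_iff_ge)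
    qed
  qed
  have fs: "snd (popt P x) = P - fst (popt P x)" unfolding popt_def by (auto simp: field_simps)
  show ?thesis using s1 s2 q[of P1] q[of "fst (popt P x)"] fs assms(2)
    by (smt (verit) mult_left_mono)
qed

theorem lemma3:
  fixes P A1 A2 s1 s2 g1 g2 k0 eta rhobar :: real
  assumes "P > 0" and "A1 > 0" and "A2 > 0" and "s1 > 0" and "s2 > 0"
    and "g1 > 0" and "g2 > 0" and "k0 > 0" and "eta > 0"
    and "0 < rhobar" and "rhobar \<le> 1"
  defines "b1 \<equiv> beta A1 s1 k0 eta" and "b2 \<equiv> beta A2 s2 k0 eta"
    and "x \<equiv> xi A1 A2 s1 s2 g1 g2 k0 eta rhobar"
  shows "feasible P (fst (popt P x)) (snd (popt P x)) \<and>
         (\<forall>P1 P2. feasible P P1 P2 \<longrightarrow>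
            dual_rate b1 b2 g1 g2 rhobar P1 P2
              \<le> dual_rate b1 b2 g1 g2 rhobar (fst (popt P x)) (snd (popt P x)))"
proof
  show "feasible P (fst (popt P x)) (snd (popt P x))"
    using assms(1) unfolding feasible_def popt_def by (auto simp: field_simps)
  have b1p: "b1 > 0" unfolding b1_def beta_def using assms by simp
  have b2p: "b2 > 0" unfolding b2_def beta_def using assms by simp
  have dp: "b1*b2*g1*g2*rhobar > 0" using b1p b2p assms by simp
  have xe: "b1*g1 = b2*g2 + (b1*b2*g1*g2*rhobar) * x"
    unfolding x_def xi_def b1_def b2_def beta_def using assms
    by (simp add: field_simps power2_eq_square)
  show "\<forall>P1 P2. feasible P P1 P2 \<longrightarrow>
            dual_rate b1 b2 g1 g2 rhobar P1 P2
              \<le> dual_rate b1 b2 g1 g2 rhobar (fst (popt P x)) (snd (popt P x))"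
  proof (intro allI impI)
    fix P1 P2 assume f: "feasible P P1 P2"
    have c: "b1*g1*P1 + b2*g2*P2 + (b1*b2*g1*g2*rhobar)*P1*P2 \<le>
       b1*g1*fst(popt P x) + b2*g2*snd(popt P x) + (b1*b2*g1*g2*rhobar)*fst(popt P x)*snd(popt P x)"
      using f b2p assms(7) dp xe assms(1)
      by (intro core) (auto simp: feasible_def)
    have pos: "0 < 1 + b1*P1*g1 + b2*P2*g2 + b1*P1*(b2*P2)*g1*g2*rhobar"
      using f b1p b2p assms unfolding feasible_def by (simp add: add_pos_nonneg)
    show "dual_rate b1 b2 g1 g2 rhobar P1 P2
              \<le> dual_rate b1 b2 g1 g2 rhobar (fst (popt P x)) (snd (popt P x))"
      unfolding dual_rate_def using pos c
      by (subst log_le_cancel_iff) (auto simp: algebra_simps)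
  qed
qed

end
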